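(* Let $b\ge 2$ and $n\ge 0$ be integers. Then $T_b(n)=\langle\{s_0,s_1,\dots,s_{n+1}\}\rangle$, and $\{s_0,s_1,\dots,s_{n+1}\}$ is the minimal system of generators of $T_b(n)$. In particular the embedding dimension is $e(T_b(n))=n+2$.
   Context: For integers $b\ge 2$, $n\ge 0$, $i\ge0$ put $s_i=(b+1)b^{n+i}-1$ and $T_b(n)=\langle\{s_i:i\in\mathbb{N}\}\rangle$, the submonoid of $(\mathbb{N},+)$ generated by the $s_i$. A set $A$ is a system of generators of a numerical semigroup $S$ if $S=\langle A\rangle$; it is minimal if no proper subset of $A$ generates $S$ (every numerical semigroup has a unique minimal system of generators, which is finite). The embedding dimension $e(S)$ is the cardinality of the minimal system of generators. *)

theory Defs
  imports Main
begin

inductive_set monoid_gen :: "nat set \<Rightarrow> nat set" for A :: "nat set" where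
  zero: "0 \<in> monoid_gen A"
| add: "a \<in> A \<Longrightarrow> x \<in> monoid_gen A \<Longrightarrow> a + x \<in> monoid_gen A"

definition is_min_gen_sys :: "nat set \<Rightarrow> nat set \<Rightarrow> bool" where
  "is_min_gen_sys A S \<longleftrightarrow> monoid_gen A = S \<and> (\<forall>B. B \<subset> A \<longrightarrow> monoid_gen B \<noteq> S)"

definition embedding_dim :: "nat set \<Rightarrow> nat" where
  "embedding_dim S = card (THE A. is_min_gen_sys A S)"

definition s_gen :: "nat \<Rightarrow> nat \<Rightarrow> nat \<Rightarrow> nat" where
  "s_gen b n i = (b + 1) * b ^ (n + i) - 1"

definition T_sg :: "nat \<Rightarrow> nat \<Rightarrow> nat set" where
  "T_sg b n = monoid_gen (range (s_gen b n))"

end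

theory Submission
  imports Defs
begin

lemma mg_gen: "a \<in> A \<Longrightarrow> a \<in> monoid_gen A"
  using monoid_gen.add[OF _ monoid_gen.zero] by fastforce

lemma mg_add: "x \<in> monoid_gen A \<Longrightarrow> y \<in> monoid_gen A \<Longrightarrow> x + y \<in> monoid_gen A"
  by (induction x rule: monoid_gen.induct) (auto simp: add.assoc intro: monoid_gen.add)

lemma mg_mult: "x \<in> monoid_gen A \<Longrightarrow> k * x \<in> monoid_gen A"
  by (induction k) (auto intro: mg_add monoid_gen.zero)

lemma mg_sub_aux: "x \<in> monoid_gen A \<Longrightarrow> A \<subseteq> monoid_gen B \<Longrightarrow> x \<in> monoid_gen B"
  by (induction x rule: monoid_gen.induct) (auto intro: mg_add monoid_gen.zero)

lemma mg_sub: "A \<subseteq> monoid_gen B \<Longrightarrow> monoid_gen A \<subseteq> monoid_gen B"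
  using mg_sub_aux by blast

lemma mg_mono: "A \<subseteq> B \<Longrightarrow> monoid_gen A \<subseteq> monoid_gen B"
  by (rule mg_sub) (auto intro: mg_gen)

lemma mg_le: "x \<in> monoid_gen A \<Longrightarrow> x \<in> monoid_gen {a\<in>A. a \<le> x}"
proof (induction x rule: monoid_gen.induct)
  case zero then show ?case by (rule monoid_gen.zero)
next
  case (add a x)
  have "monoid_gen {a\<in>A. a \<le> x} \<subseteq> monoid_gen {a'\<in>A. a' \<le> a + x}"
    by (rule mg_mono) auto
  with add show ?case by (auto intro!: monoid_gen.add)
qed

lemma mg_del0: "monoid_gen (A - {0}) = monoid_gen A"
proof
  show "monoid_gen (A - {0}) \<subseteq> monoid_gen A" by (rule mg_mono) auto
  show "monoid_gen A \<subseteq> monoid_gen (A - {0})"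
  proof
    fix x assume "x \<in> monoid_gen A"
    then show "x \<in> monoid_gen (A - {0})"
    proof (induction x rule: monoid_gen.induct)
      case zero then show ?case by (rule monoid_gen.zero)
    next
      case (add a x) then show ?case
        by (cases "a = 0") (auto intro: monoid_gen.add)
    qed
  qed
qed

definition atoms :: "nat set \<Rightarrow> nat set" where
  "atoms S = {x\<in>S. x \<noteq> 0 \<and> \<not>(\<exists>y z. y\<in>S \<and> z\<in>S \<and> y\<noteq>0 \<and> z\<noteq>0 \<and> x = y+z)}"

lemma min_atoms:
  assumes "is_min_gen_sys A S" shows "A = atoms S"
proof
  have S: "monoid_gen A = S" and mn: "\<And>B. B \<subset> A \<Longrightarrow> monoid_gen B \<noteq> S"
    using assms unfolding is_min_gen_sys_def by auto
  have AS: "A \<subseteq> S" using S mg_gen by blast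
  show "atoms S \<subseteq> A"
  proof
    fix x assume "x \<in> atoms S"
    then have "x \<in> monoid_gen A" "x \<in> atoms S" using S unfolding atoms_def by auto
    then show "x \<in> A"
    proof (induction x rule: monoid_gen.induct)
      case zero then show ?case by (simp add: atoms_def)
    next
      case (add a x)
      have xS: "x \<in> S" using add.hyps(2) S by simp
      show ?case
      proof (cases "x = 0")
        case True then show ?thesis using add by simp
      next
        case False
        show ?thesis
        proof (cases "a = 0")
          case True
          then have "x \<in> atoms S" using add.prems by simp
          then show ?thesis using add.IH True by simp
        next
          case False
          then show ?thesis using add.prems \<open>x \<noteq> 0\<close> xS AS add.hyps(1)
            unfolding atoms_def by blast
        qed
      qed
    qed
  qed
  show "A \<subseteq> atoms S"
  proof
    fix a assume aA: "a \<in> A"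
    show "a \<in> atoms S"
    proof (rule ccontr)
      assume na: "a \<notin> atoms S"
      have aS: "a \<in> S" using aA AS by auto
      show False
      proof (cases "a = 0")
        case True
        then have "A - {0} \<subset> A" using aA by auto
        then show False using mn mg_del0 S by metis
      next
        case False
        then obtain y z where yz: "y\<in>S" "z\<in>S" "y\<noteq>0" "z\<noteq>0" "a = y+z"
          using na aS unfolding atoms_def by blast
        have sub: "{a'\<in>A. a' \<le> y} \<subseteq> A - {a}" "{a'\<in>A. a' \<le> z} \<subseteq> A - {a}"
          using yz by auto
        have "y \<in> monoid_gen (A - {a})"
          using mg_le[of y A] yz(1) S mg_mono[OF sub(1)] by auto
        moreover have "z \<in> monoid_gen (A - {a})"
          using mg_le[of z A] yz(2) S mg_mono[OF sub(2)] by auto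
        ultimately have "a \<in> monoid_gen (A - {a})" using yz(5) mg_add by simp
        then have "A \<subseteq> monoid_gen (A - {a})" by (auto intro: mg_gen)
        then have "monoid_gen A \<subseteq> monoid_gen (A - {a})" by (rule mg_sub)
        moreover have "monoid_gen (A - {a}) \<subseteq> monoid_gen A" by (rule mg_mono) auto
        ultimately have "monoid_gen (A - {a}) = S" using S by auto
        moreover have "A - {a} \<subset> A" using aA by auto
        ultimately show False using mn by blast
      qed
    qed
  qed
qed

lemma count_lemma:
  fixes c :: nat
  assumes "\<forall>a\<in>A. c dvd (a + 1) \<and> c - 1 \<le> a" and "x \<in> monoid_gen A"
  shows "\<exists>k. c dvd (x + k) \<and> k * (c - 1) \<le> x \<and> (k = 0 \<longrightarrow> x = 0) \<and> (k = 1 \<longrightarrow> x \<in> A)"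
  using assms(2)
proof (induction x rule: monoid_gen.induct)
  case zero then show ?case by (intro exI[of _ 0]) auto
next
  case (add a x)
  then obtain k where k: "c dvd (x + k)" "k * (c - 1) \<le> x" "(k = 0 \<longrightarrow> x = 0)" "(k = 1 \<longrightarrow> x \<in> A)"
    by blast
  have "c dvd ((x + k) + (a + 1))" using k(1) assms(1) add.hyps(1) by (metis dvd_add)
  then have "c dvd (a + x + Suc k)" by (simp add: algebra_simps)
  moreover have "Suc k * (c - 1) \<le> a + x" using k(2) assms(1) add.hyps(1) by auto
  moreover have "Suc k = 1 \<longrightarrow> a + x \<in> A" using k(3) add.hyps(1) by auto
  ultimately show ?case by blast
qed

lemma base_eq:
  fixes b' B g x y c :: nat
  assumes g: "b' * g + 1 = B" and c: "c = (b' + 2) * B" and y: "y = 1 + g"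
    and x: "x + y = 1 + c * b'"
  shows "x * (c - 1) + y * (c * Suc b' - 1) = c * (Suc b' ^ 2 * B) - 1"
proof -
  have B1: "B \<ge> 1" using g by auto
  have c1: "c \<ge> 1" using c B1 by auto
  have gen: "\<And>z w::nat. z \<ge> 1 \<Longrightarrow> w * (z - 1) + w = w * z"
    by (case_tac z) auto
  have e1: "x * (c - 1) + x = x * c" using c1 gen by blast
  have e2: "y * (c * Suc b' - 1) + y = y * (c * Suc b')" using c1 gen[of "c * Suc b'" y] by simp
  have "x * c + y * (c * Suc b') = c * ((x + y) + b' * y)" by (simp add: algebra_simps)
  also have "\<dots> = c * (c * b' + B + b')" using x y g[symmetric] by (simp add: algebra_simps)
  also have "\<dots> = c * (Suc b' ^ 2 * B + b')" using c by (simp add: algebra_simps power2_eq_square)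
  finally have "x * c + y * (c * Suc b') + 1 = c * (Suc b' ^ 2 * B) + (x + y)"
    using x by (simp add: algebra_simps)
  then show ?thesis using e1 e2 by linarith
qed

lemma geo: "(b'::nat) * (\<Sum>i<n. Suc b' ^ i) + 1 = Suc b' ^ n"
  by (induction n) (auto simp: algebra_simps)

theorem mainTheorem4:
  fixes b n :: nat
  assumes "b \<ge> 2"
  shows "T_sg b n = monoid_gen (s_gen b n ` {0..n+1})
       \<and> is_min_gen_sys (s_gen b n ` {0..n+1}) (T_sg b n)
       \<and> embedding_dim (T_sg b n) = n + 2"
proof -
  have "b = Suc (Suc (b - 2))" using assms by simp
  then obtain k where bk: "b = Suc (Suc k)" by blast
  define c where "c = (b+1)*b^n"
  define s where "s = s_gen b n"
  define A where "A = s ` {0..n+1}"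
  define M where "M = monoid_gen A"
  have bn1: "b^n \<ge> 1" using bk by simp
  have c3: "c \<ge> 3"
  proof -
    have "3 * 1 \<le> (b+1) * b^n" using bk bn1 by (intro mult_le_mono) auto
    then show ?thesis unfolding c_def by linarith
  qed
  have bpos: "\<And>i. b^i \<ge> 1" using bk by simp
  have sdef: "\<And>i. s i = c * b^i - 1"
    unfolding s_def s_gen_def c_def by (simp add: power_add algebra_simps)
  have cbi: "\<And>i. c * b^i \<ge> c" using bpos by simp
  have sp1: "\<And>i. s i + 1 = c * b^i" using sdef cbi c3
    by (metis le_add_diff_inverse2 le_trans one_le_numeral Suc_leD numeral_3_eq_3)
  have sdvd: "\<And>i. c dvd (s i + 1)" using sp1 by simp
  have sge: "\<And>i. c - 1 \<le> s i" using sdef cbi by (simp add: diff_le_mono)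
  have smono: "\<And>i j. i < j \<Longrightarrow> s i < s j"
  proof -
    fix i j :: nat assume "i < j"
    then have "b^i < b^j" using bk by (simp add: power_strict_increasing)
    then have "c * b^i < c * b^j" using c3 by simp
    then show "s i < s j" using sp1[of i] sp1[of j] by linarith
  qed
  have "strict_mono s" using smono by (rule strict_monoI)
  then have sinj: "inj s" by (rule strict_mono_imp_inj_on)
  have ssuc: "\<And>i. s (Suc i) = b * s i + (b - 1)"
  proof -
    fix i
    obtain z where z: "c * b^i = Suc z" using sp1[of i] by (metis Suc_eq_plus1)
    have "c * b ^ Suc i = b * Suc z" using z by (simp add: algebra_simps)
    then show "s (Suc i) = b * s i + (b - 1)" using sdef[of i] sdef[of "Suc i"] z bk by simp
  qed
  have sA: "\<And>i. i \<le> n+1 \<Longrightarrow> s i \<in> M" unfolding M_def A_def by (auto intro: mg_gen)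
  define g where "g = (\<Sum>i<n. b ^ i)"
  have g: "Suc k * g + 1 = b^n" unfolding g_def bk by (rule geo)
  define y where "y = 1 + g"
  have "g \<le> Suc k * g" by simp
  then have yB: "y \<le> b^n" using g unfolding y_def by linarith
  have cb: "c = (Suc k + 2) * b^n" unfolding c_def bk by simp
  have "c \<ge> 3 * b^n" unfolding cb by (intro mult_le_mono1) simp
  moreover have "c * Suc k \<ge> c" by simp
  ultimately have "c * Suc k \<ge> 3 * b^n" by linarith
  then have ylt: "y + 2 \<le> 1 + c * Suc k" using yB bn1 by linarith
  define x where "x = 1 + c * Suc k - y"
  have xy: "x + y = 1 + c * Suc k" using ylt unfolding x_def by simp
  have x2: "x \<ge> 2" using ylt unfolding x_def by simp
  have s0: "s 0 = c - 1" using sdef by simp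
  have s1: "s 1 = c * Suc (Suc k) - 1" using sdef bk by simp
  have pw: "b^(n+2) = Suc (Suc k) ^ 2 * b^n" using bk by (simp only: power_add mult.commute)
  have sn2: "s (n+2) = c * (Suc (Suc k) ^ 2 * b^n) - 1" using sdef[of "n+2"] pw by (simp only:)
  have beq: "x * s 0 + y * s 1 = s (n+2)"
    using base_eq[OF g cb y_def xy] s0 s1 sn2 by simp
  have basef: "s (n+2) = 2 * s 0 + ((x - 2) * s 0 + y * s 1)"
  proof -
    obtain x' where "x = x' + 2" using x2 by (metis le_add_diff_inverse2)
    then have "x * s 0 = 2 * s 0 + (x - 2) * s 0" by (simp add: algebra_simps)
    then show ?thesis using beq by linarith
  qed
  have inv: "\<And>m. m \<ge> n+2 \<Longrightarrow> \<exists>z\<in>M. s m = 2 * s 0 + z"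
  proof -
    fix m assume "m \<ge> n+2"
    then show "\<exists>z\<in>M. s m = 2 * s 0 + z"
    proof (induction m rule: dec_induct)
      case base
      have "(x - 2) * s 0 + y * s 1 \<in> M" using sA[of 0] sA[of 1] unfolding M_def by (auto intro!: mg_add mg_mult)
      then show ?case using basef by blast
    next
      case (step m)
      then obtain z where z: "z \<in> M" "s m = 2 * s 0 + z" by blast
      have "s (Suc m) = b * (2 * s 0 + z) + (b - 1)" using ssuc z by simp
      also have "\<dots> = 2 * s 0 + (s 1 + k * s 0 + b * z)"
        using ssuc[of 0] bk by (simp add: algebra_simps)
      finally have e: "s (Suc m) = 2 * s 0 + (s 1 + k * s 0 + b * z)" .
      have "s 1 + k * s 0 + b * z \<in> M" using sA[of 0] sA[of 1] z(1) unfolding M_def by (auto intro!: mg_add mg_mult)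
      then show ?case using e by blast
    qed
  qed
  have allM: "\<And>m. s m \<in> M"
  proof -
    fix m show "s m \<in> M"
    proof (cases "m \<le> n+1")
      case True then show ?thesis by (rule sA)
    next
      case False
      then obtain z where "z \<in> M" "s m = 2 * s 0 + z" using inv[of m] by auto
      then show ?thesis using sA[of 0] unfolding M_def by (auto intro!: mg_add mg_mult)
    qed
  qed
  have TM: "T_sg b n = M"
  proof
    show "T_sg b n \<subseteq> M" unfolding T_sg_def s_def[symmetric] M_def
      by (rule mg_sub) (use allM M_def in auto)
    show "M \<subseteq> T_sg b n" unfolding T_sg_def s_def[symmetric] M_def A_def by (rule mg_mono) auto
  qed
  have notin: "\<And>j. j \<le> n+1 \<Longrightarrow> s j \<notin> monoid_gen (A - {s j})"
  proof
    fix j assume j: "j \<le> n+1" and sj: "s j \<in> monoid_gen (A - {s j})"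
    have "\<forall>a\<in>A - {s j}. c dvd (a + 1) \<and> c - 1 \<le> a" unfolding A_def using sdvd sge by auto
    from count_lemma[OF this sj] obtain m where m: "c dvd (s j + m)" "m * (c - 1) \<le> s j"
      "m = 0 \<longrightarrow> s j = 0" "m = 1 \<longrightarrow> s j \<in> A - {s j}" by blast
    have "s j \<ge> 2" using sge[of j] c3 by linarith
    then have m2: "m \<ge> 2" using m(3,4) by (cases m) auto
    have "c dvd (s j + m) - (s j + 1)" using m(1) sdvd[of j] by (rule dvd_diff_nat)
    then have "c dvd (m - 1)" by simp
    moreover have "m - 1 \<noteq> 0" using m2 by simp
    ultimately have "c \<le> m - 1" by (simp add: dvd_imp_le)
    then have "(c + 1) * (c - 1) \<le> m * (c - 1)" using m2 by (intro mult_le_mono1) linarith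
    then have le: "(c + 1) * (c - 1) \<le> s j" using m(2) by linarith
    have "b^j \<le> b^(n+1)" using j bk by (intro power_increasing) auto
    also have "b^(n+1) < c" unfolding c_def using bn1 bk by simp
    finally have "c * b^j < c * c" using c3 by simp
    then have "s j < c * c - 1" using sdef[of j] cbi[of j] c3 by linarith
    moreover have "(c + 1) * (c - 1) = c * c - 1" using c3 by (simp add: algebra_simps)
    ultimately show False using le by linarith
  qed
  have minA: "is_min_gen_sys A (T_sg b n)"
    unfolding is_min_gen_sys_def
  proof (intro conjI allI impI)
    show "monoid_gen A = T_sg b n" using TM M_def by simp
    fix B assume B: "B \<subset> A"
    then obtain a where "a \<in> A" "a \<notin> B" by blast
    then obtain j where j: "j \<le> n+1" "s j \<notin> B" unfolding A_def by auto
    have "B \<subseteq> A - {s j}" using B j by auto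
    then have "monoid_gen B \<subseteq> monoid_gen (A - {s j})" by (rule mg_mono)
    moreover have "s j \<in> T_sg b n" using TM allM by simp
    ultimately show "monoid_gen B \<noteq> T_sg b n" using notin[OF j(1)] by blast
  qed
  have the: "(THE A'. is_min_gen_sys A' (T_sg b n)) = A"
    by (rule the_equality) (use minA min_atoms in metis)+
  have card: "card A = n + 2" unfolding A_def using sinj
    by (simp add: card_image inj_on_subset)
  show ?thesis using TM minA the card unfolding embedding_dim_def M_def A_def s_def by simp
qed

end
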